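(* Let an operational theory contain binary-outcome measurements $\mathcal{M}_1,\mathcal{M}_2,\mathcal{M}_3$ (outcomes $X_i\in\{0,1\}$) that are pairwise jointly measurable via joint measurements $\mathcal{M}_{12},\mathcal{M}_{13},\mathcal{M}_{23}$, and a preparation $\mathcal{P}_*$ with $p(X_i=0,X_j=1|\mathcal{M}_{ij};\mathcal{P}_* )=p(X_i=1,X_j=0|\mathcal{M}_{ij};\mathcal{P}_* )=\tfrac12$ for all $i\neq j$. Then there is no ontological model reproducing these statistics that is measurement-noncontextual and outcome-deterministic (for $\mathcal{M}_1,\mathcal{M}_2,\mathcal{M}_3,\mathcal{M}_{12},\mathcal{M}_{13},\mathcal{M}_{23}$).
   Context: An operational theory assigns outcome probabilities $p(X|M;P)$ to preparation procedures $P$ and measurement procedures $M$; measurements $\mathcal{M}$ (preparations $\mathcal{P}$) are equivalence classes of procedures with identical statistics. A joint measurement $\mathcal{M}_{ij}$ of $\mathcal{M}_i,\mathcal{M}_j$ has outcome $(X_i,X_j)$ whose marginals reproduce the statistics of $\mathcal{M}_i$ and $\mathcal{M}_j$ for every preparation. An ontological model specifies ontic states $\lambda\in\Lambda$, distributions $p(\lambda|P)$ and response functions $p(X|M;\lambda)$ with $p(X|M;P)=\sum_\lambda p(X|M;\lambda)p(\lambda|P)$. It is measurement-noncontextual if the response function of a procedure depends only on its equivalence class, and outcome-deterministic for a measurement if its response function takes values in $\{0,1\}$. *)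

theory Defs
  imports "HOL-Probability.Probability_Mass_Function"
begin

text \<open>Outcomes of binary measurements are bool (False = 0, True = 1);
joint outcomes (X_i, X_j) are bool \<times> bool.\<close>

definition meas_class :: "('m \<Rightarrow> 'p \<Rightarrow> 'x \<Rightarrow> real) \<Rightarrow> 'm set \<Rightarrow> bool" where
  "meas_class pr A \<longleftrightarrow> A \<noteq> {} \<and>
     (\<forall>m\<in>A. \<forall>m'. m' \<in> A \<longleftrightarrow> (\<forall>P x. pr m' P x = pr m P x))"

definition prep_class ::
  "('m \<Rightarrow> 'p \<Rightarrow> bool \<Rightarrow> real) \<Rightarrow> ('j \<Rightarrow> 'p \<Rightarrow> bool \<times> bool \<Rightarrow> real) \<Rightarrow> 'p set \<Rightarrow> bool" where
  "prep_class pr1 pr2 Ps \<longleftrightarrow> Ps \<noteq> {} \<and>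
     (\<forall>P\<in>Ps. \<forall>P'. P' \<in> Ps \<longleftrightarrow>
        ((\<forall>m x. pr1 m P' x = pr1 m P x) \<and> (\<forall>J y. pr2 J P' y = pr2 J P y)))"

definition joint_meas ::
  "('m \<Rightarrow> 'p \<Rightarrow> bool \<Rightarrow> real) \<Rightarrow> ('j \<Rightarrow> 'p \<Rightarrow> bool \<times> bool \<Rightarrow> real)
     \<Rightarrow> 'j set \<Rightarrow> 'm set \<Rightarrow> 'm set \<Rightarrow> bool" where
  "joint_meas pr1 pr2 MJ Mi Mj \<longleftrightarrow>
     (\<forall>J\<in>MJ. \<forall>P.
        (\<forall>m\<in>Mi. \<forall>x. pr1 m P x = pr2 J P (x, False) + pr2 J P (x, True)) \<and>
        (\<forall>m\<in>Mj. \<forall>y. pr1 m P y = pr2 J P (False, y) + pr2 J P (True, y)))"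

definition response_funs :: "('m \<Rightarrow> 'x::finite \<Rightarrow> 'l \<Rightarrow> real) \<Rightarrow> bool" where
  "response_funs \<xi> \<longleftrightarrow> (\<forall>m l. (\<forall>x. 0 \<le> \<xi> m x l) \<and> (\<Sum>x\<in>UNIV. \<xi> m x l) = 1)"

definition reproduces :: "('m \<Rightarrow> 'p \<Rightarrow> 'x \<Rightarrow> real) \<Rightarrow> ('p \<Rightarrow> 'l pmf) \<Rightarrow> ('m \<Rightarrow> 'x \<Rightarrow> 'l \<Rightarrow> real) \<Rightarrow> bool" where
  "reproduces pr mu \<xi> \<longleftrightarrow>
     (\<forall>m P x. pr m P x = measure_pmf.expectation (mu P) (\<lambda>l. \<xi> m x l))"

definition meas_noncontextual :: "('m \<Rightarrow> 'x \<Rightarrow> 'l \<Rightarrow> real) \<Rightarrow> 'm set \<Rightarrow> bool" where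
  "meas_noncontextual \<xi> A \<longleftrightarrow> (\<forall>m\<in>A. \<forall>m'\<in>A. \<xi> m = \<xi> m')"

definition outcome_deterministic :: "('m \<Rightarrow> 'x \<Rightarrow> 'l \<Rightarrow> real) \<Rightarrow> 'm set \<Rightarrow> bool" where
  "outcome_deterministic \<xi> A \<longleftrightarrow> (\<forall>m\<in>A. \<forall>x l. \<xi> m x l = 0 \<or> \<xi> m x l = 1)"

end

theory Submission
  imports Defs
begin


lemma pmf_exp0:
  fixes f :: "'l \<Rightarrow> real"
  assumes "\<forall>l. 0 \<le> f l" "\<forall>l. f l \<le> 1" "measure_pmf.expectation p f = 0" "l \<in> set_pmf p"
  shows "f l = 0"
proof -
  have int: "integrable (measure_pmf p) f"
    by (rule measure_pmf.integrable_const_bound[where B=1]) (use assms in auto)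
  have "AE x in measure_pmf p. f x = 0"
    using integral_nonneg_eq_0_iff_AE[OF int] assms by auto
  then show ?thesis using assms(4) by (simp add: AE_measure_pmf_iff)
qed

lemma sum4: "(\<Sum>x\<in>(UNIV::(bool\<times>bool) set). g x) = g (False,False) + g (False,True) + g (True,False) + g (True,True)"
  by (simp add: UNIV_Times_UNIV[symmetric] sum.cartesian_product[symmetric] UNIV_bool add.assoc del: UNIV_Times_UNIV)

lemma bound_int:
  fixes f :: "'l \<Rightarrow> real"
  assumes "\<forall>l. 0 \<le> f l" "\<forall>l. f l \<le> 1"
  shows "integrable (measure_pmf p) f"
  by (rule measure_pmf.integrable_const_bound[where B=1]) (use assms in auto)

lemma key:
  fixes \<xi>2 :: "'j \<Rightarrow> bool \<times> bool \<Rightarrow> 'l \<Rightarrow> real"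
  assumes rf: "response_funs \<xi>2"
    and rep: "\<And>x. pr2 J P x = measure_pmf.expectation p (\<xi>2 J x)"
    and h1: "pr2 J P (False, True) = 1/2" and h2: "pr2 J P (True, False) = 1/2"
    and l: "l \<in> set_pmf p"
  shows "\<xi>2 J (False,False) l + \<xi>2 J (False,True) l = \<xi>2 J (False,True) l
       \<and> \<xi>2 J (False,False) l + \<xi>2 J (True,False) l = \<xi>2 J (True,False) l
       \<and> \<xi>2 J (False,True) l + \<xi>2 J (True,False) l = 1"
proof -
  have nn: "\<And>x l. 0 \<le> \<xi>2 J x l" using rf unfolding response_funs_def by blast
  have s1: "\<And>l. \<xi>2 J (False,False) l + \<xi>2 J (False,True) l + \<xi>2 J (True,False) l + \<xi>2 J (True,True) l = 1"
    using rf unfolding response_funs_def by (metis sum4)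
  have le1: "\<And>x l. \<xi>2 J x l \<le> 1"
  proof -
    fix x l
    show "\<xi>2 J x l \<le> 1" using s1[of l] nn[of "(False,False)" l] nn[of "(False,True)" l]
      nn[of "(True,False)" l] nn[of "(True,True)" l]
      apply (cases x) apply (rename_tac u v) apply (case_tac u; case_tac v) by simp_all
  qed
  have I: "\<And>x. integrable (measure_pmf p) (\<xi>2 J x)"
    by (rule bound_int) (use nn le1 in auto)
  define g where "g l = \<xi>2 J (False,False) l + \<xi>2 J (True,True) l" for l
  have "(\<lambda>l. g l) = (\<lambda>l. 1 - \<xi>2 J (False,True) l - \<xi>2 J (True,False) l)"
    using s1 unfolding g_def by (auto simp: algebra_simps fun_eq_iff)
  hence "measure_pmf.expectation p g = 1 - pr2 J P (False,True) - pr2 J P (True,False)"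
    using I by (simp add: rep)
  hence E: "measure_pmf.expectation p g = 0" using h1 h2 by simp
  have "g l = 0"
  proof (rule pmf_exp0[OF _ _ E l])
    show "\<forall>l. 0 \<le> g l" unfolding g_def using nn by (simp add: add_nonneg_nonneg)
    show "\<forall>l. g l \<le> 1" unfolding g_def
    proof
      fix l show "\<xi>2 J (False, False) l + \<xi>2 J (True, True) l \<le> 1"
        using s1[of l] nn[of "(False,True)" l] nn[of "(True,False)" l] by linarith
    qed
  qed
  hence "\<xi>2 J (False,False) l = 0" "\<xi>2 J (True,True) l = 0"
    unfolding g_def using nn[of "(False,False)" l] nn[of "(True,True)" l] by linarith+
  then show ?thesis using s1[of l] by simp
qed

lemma in_class:
  assumes "meas_class pr A" "m0 \<in> A" "\<And>P x. pr m P x = pr m0 P x"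
  shows "m \<in> A"
  using assms unfolding meas_class_def by blast

theorem corollary2:
  fixes pr1 :: "'m \<Rightarrow> 'p \<Rightarrow> bool \<Rightarrow> real"
    and pr2 :: "'j \<Rightarrow> 'p \<Rightarrow> bool \<times> bool \<Rightarrow> real"
    and cg1 cg2 :: "'j \<Rightarrow> 'm"
    and M1 M2 M3 :: "'m set"
    and M12 M13 M23 :: "'j set"
    and Pstar :: "'p set"
  assumes cg1_stat: "\<And>J P x. pr1 (cg1 J) P x = pr2 J P (x, False) + pr2 J P (x, True)"
    and cg2_stat: "\<And>J P y. pr1 (cg2 J) P y = pr2 J P (False, y) + pr2 J P (True, y)"
    and meas: "meas_class pr1 M1" "meas_class pr1 M2" "meas_class pr1 M3"
    and jmeas: "meas_class pr2 M12" "meas_class pr2 M13" "meas_class pr2 M23"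
    and joint: "joint_meas pr1 pr2 M12 M1 M2" "joint_meas pr1 pr2 M13 M1 M3"
               "joint_meas pr1 pr2 M23 M2 M3"
    and prep: "prep_class pr1 pr2 Pstar"
    and stats: "\<And>P J. P \<in> Pstar \<Longrightarrow> J \<in> M12 \<union> M13 \<union> M23 \<Longrightarrow>
                  pr2 J P (False, True) = 1/2 \<and> pr2 J P (True, False) = 1/2"
  shows "\<not> (\<exists>(mu :: 'p \<Rightarrow> 'l pmf) (\<xi>1 :: 'm \<Rightarrow> bool \<Rightarrow> 'l \<Rightarrow> real)
                (\<xi>2 :: 'j \<Rightarrow> bool \<times> bool \<Rightarrow> 'l \<Rightarrow> real).
           response_funs \<xi>1 \<and> response_funs \<xi>2 \<and>
           reproduces pr1 mu \<xi>1 \<and> reproduces pr2 mu \<xi>2 \<and>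
           (\<forall>J x l. \<xi>1 (cg1 J) x l = \<xi>2 J (x, False) l + \<xi>2 J (x, True) l) \<and>
           (\<forall>J y l. \<xi>1 (cg2 J) y l = \<xi>2 J (False, y) l + \<xi>2 J (True, y) l) \<and>
           (\<forall>A\<in>{M1, M2, M3}. meas_noncontextual \<xi>1 A \<and> outcome_deterministic \<xi>1 A) \<and>
           (\<forall>A\<in>{M12, M13, M23}. meas_noncontextual \<xi>2 A \<and> outcome_deterministic \<xi>2 A))"
  proof
  assume "\<exists>(mu :: 'p \<Rightarrow> 'l pmf) (\<xi>1 :: 'm \<Rightarrow> bool \<Rightarrow> 'l \<Rightarrow> real)
                (\<xi>2 :: 'j \<Rightarrow> bool \<times> bool \<Rightarrow> 'l \<Rightarrow> real).
           response_funs \<xi>1 \<and> response_funs \<xi>2 \<and>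
           reproduces pr1 mu \<xi>1 \<and> reproduces pr2 mu \<xi>2 \<and>
           (\<forall>J x l. \<xi>1 (cg1 J) x l = \<xi>2 J (x, False) l + \<xi>2 J (x, True) l) \<and>
           (\<forall>J y l. \<xi>1 (cg2 J) y l = \<xi>2 J (False, y) l + \<xi>2 J (True, y) l) \<and>
           (\<forall>A\<in>{M1, M2, M3}. meas_noncontextual \<xi>1 A \<and> outcome_deterministic \<xi>1 A) \<and>
           (\<forall>A\<in>{M12, M13, M23}. meas_noncontextual \<xi>2 A \<and> outcome_deterministic \<xi>2 A)"
  then obtain mu :: "'p \<Rightarrow> 'l pmf" and \<xi>1 :: "'m \<Rightarrow> bool \<Rightarrow> 'l \<Rightarrow> real"
      and \<xi>2 :: "'j \<Rightarrow> bool \<times> bool \<Rightarrow> 'l \<Rightarrow> real" where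
    rf2: "response_funs \<xi>2" and rep2: "reproduces pr2 mu \<xi>2"
    and c1: "\<forall>J x l. \<xi>1 (cg1 J) x l = \<xi>2 J (x, False) l + \<xi>2 J (x, True) l"
    and c2: "\<forall>J y l. \<xi>1 (cg2 J) y l = \<xi>2 J (False, y) l + \<xi>2 J (True, y) l"
    and nc: "\<forall>A\<in>{M1, M2, M3}. meas_noncontextual \<xi>1 A \<and> outcome_deterministic \<xi>1 A"
    by blast
  obtain m1 where m1: "m1 \<in> M1" using meas(1) unfolding meas_class_def by blast
  obtain m2 where m2: "m2 \<in> M2" using meas(2) unfolding meas_class_def by blast
  obtain m3 where m3: "m3 \<in> M3" using meas(3) unfolding meas_class_def by blast
  obtain J12 where J12: "J12 \<in> M12" using jmeas(1) unfolding meas_class_def by blast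
  obtain J13 where J13: "J13 \<in> M13" using jmeas(2) unfolding meas_class_def by blast
  obtain J23 where J23: "J23 \<in> M23" using jmeas(3) unfolding meas_class_def by blast
  obtain P where P: "P \<in> Pstar" using prep unfolding prep_class_def by blast
  obtain l where l: "l \<in> set_pmf (mu P)" using set_pmf_not_empty by fastforce
  have a1: "cg1 J12 \<in> M1" by (rule in_class[OF meas(1) m1]) (use joint(1) J12 m1 cg1_stat in \<open>simp add: joint_meas_def\<close>)
  have a2: "cg1 J13 \<in> M1" by (rule in_class[OF meas(1) m1]) (use joint(2) J13 m1 cg1_stat in \<open>simp add: joint_meas_def\<close>)
  have b1: "cg2 J12 \<in> M2" by (rule in_class[OF meas(2) m2]) (use joint(1) J12 m2 cg2_stat in \<open>simp add: joint_meas_def\<close>)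
  have b2: "cg1 J23 \<in> M2" by (rule in_class[OF meas(2) m2]) (use joint(3) J23 m2 cg1_stat in \<open>simp add: joint_meas_def\<close>)
  have d1: "cg2 J13 \<in> M3" by (rule in_class[OF meas(3) m3]) (use joint(2) J13 m3 cg2_stat in \<open>simp add: joint_meas_def\<close>)
  have d2: "cg2 J23 \<in> M3" by (rule in_class[OF meas(3) m3]) (use joint(3) J23 m3 cg2_stat in \<open>simp add: joint_meas_def\<close>)
  have k: "\<xi>1 (cg1 J) False l + \<xi>1 (cg2 J) False l = 1" if "J \<in> M12 \<union> M13 \<union> M23" for J
  proof -
    have "\<xi>2 J (False,False) l + \<xi>2 J (False,True) l = \<xi>2 J (False,True) l
       \<and> \<xi>2 J (False,False) l + \<xi>2 J (True,False) l = \<xi>2 J (True,False) l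
       \<and> \<xi>2 J (False,True) l + \<xi>2 J (True,False) l = 1"
      by (rule key[OF rf2 _ _ _ l, where P=P])
         (use rep2 stats[OF P that] in \<open>auto simp: reproduces_def\<close>)
    then show ?thesis using c1 c2 by simp
  qed
  have e1: "\<xi>1 (cg1 J12) = \<xi>1 (cg1 J13)" using nc a1 a2 unfolding meas_noncontextual_def by (metis insert_iff)
  have e2: "\<xi>1 (cg2 J12) = \<xi>1 (cg1 J23)" using nc b1 b2 unfolding meas_noncontextual_def by (metis insert_iff)
  have e3: "\<xi>1 (cg2 J13) = \<xi>1 (cg2 J23)" using nc d1 d2 unfolding meas_noncontextual_def by (metis insert_iff)
  have det: "\<xi>1 (cg1 J12) False l = 0 \<or> \<xi>1 (cg1 J12) False l = 1"
    using nc a1 unfolding outcome_deterministic_def by (metis insert_iff)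
  have "\<xi>1 (cg1 J12) False l + \<xi>1 (cg2 J12) False l = 1" using k J12 by blast
  moreover have "\<xi>1 (cg1 J13) False l + \<xi>1 (cg2 J13) False l = 1" using k J13 by blast
  moreover have "\<xi>1 (cg1 J23) False l + \<xi>1 (cg2 J23) False l = 1" using k J23 by blast
  ultimately show False using det unfolding e1 e2 e3 by linarith
qed

end
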